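(* Let $L$ and $L'$ be finite sets with $|L|=n$ and $|L'|=m$, let $\mathcal U$ be a finite set of control inputs, and let $F:L\times\mathcal U\to L'$. Say that C-uniform control inputs exist between $L$ and $L'$ if there are numbers $p(x,u)\ge 0$ ($x\in L$, $u\in\mathcal U$) with $\sum_{u\in\mathcal U}p(x,u)=1$ for every $x\in L$ and $$\sum_{x\in L}\ \sum_{u\in\mathcal U:\ F(x,u)=x'} p(x,u)\cdot\frac{1}{n}=\frac{1}{m}\quad\text{for every } x'\in L'.$$ Construct the flow network with a source $s$, a sink $t$, one node for each element of $L$ and one node for each element of $L'$; an arc $s\to x$ of capacity $m$ for each $x\in L$; an arc $x\to x'$ of capacity $m$ for each pair $x\in L$, $x'\in L'$ such that $x'=F(x,u)$ for some $u\in\mathcal U$; and an arc $x'\to t$ of capacity $n$ for each $x'\in L'$. Then C-uniform control inputs exist between $L$ and $L'$ if and only if the maximum $s$–$t$ flow in this network has value $n\cdot m$.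
   Context: Here $L$ and $L'$ represent the tilings by small disjoint cells of two consecutive reachable level sets of a discrete-time system $x_{t+1}=F(x_t,u_t)$ (the level set $L_t$ being the set of states reachable from the initial state by some control sequence of length $t$), with each cell identified with a representative state, and the state distribution on $L$ assumed uniform. *)

theory Defs
  imports Complex_Main
begin

datatype ('a, 'b) fnode = Src | Snk | LN 'a | RN 'b

definition net_nodes :: "'a set \<Rightarrow> 'b set \<Rightarrow> ('a, 'b) fnode set" where
  "net_nodes L L' = {Src, Snk} \<union> LN ` L \<union> RN ` L'"

text \<open>Capacities (0 means: no arc).\<close>
definition net_cap :: "'a set \<Rightarrow> 'b set \<Rightarrow> 'c set \<Rightarrow> ('a \<Rightarrow> 'c \<Rightarrow> 'b)
    \<Rightarrow> ('a, 'b) fnode \<Rightarrow> ('a, 'b) fnode \<Rightarrow> real" where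
  "net_cap L L' U F v w = (case (v, w) of
      (Src, LN x) \<Rightarrow> (if x \<in> L then real (card L') else 0)
    | (LN x, RN x') \<Rightarrow> (if x \<in> L \<and> x' \<in> L' \<and> (\<exists>u\<in>U. x' = F x u) then real (card L') else 0)
    | (RN x', Snk) \<Rightarrow> (if x' \<in> L' then real (card L) else 0)
    | _ \<Rightarrow> 0)"

definition is_flow :: "'v set \<Rightarrow> ('v \<Rightarrow> 'v \<Rightarrow> real) \<Rightarrow> 'v \<Rightarrow> 'v \<Rightarrow> ('v \<Rightarrow> 'v \<Rightarrow> real) \<Rightarrow> bool" where
  "is_flow V c s t f \<longleftrightarrow>
     (\<forall>u v. 0 \<le> f u v \<and> f u v \<le> c u v) \<and>
     (\<forall>u v. (u \<notin> V \<or> v \<notin> V) \<longrightarrow> f u v = 0) \<and>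
     (\<forall>v \<in> V - {s, t}. (\<Sum>u\<in>V. f u v) = (\<Sum>w\<in>V. f v w))"

definition flow_value :: "'v set \<Rightarrow> 'v \<Rightarrow> ('v \<Rightarrow> 'v \<Rightarrow> real) \<Rightarrow> real" where
  "flow_value V s f = (\<Sum>w\<in>V. f s w) - (\<Sum>u\<in>V. f u s)"

definition max_flow_value :: "'v set \<Rightarrow> ('v \<Rightarrow> 'v \<Rightarrow> real) \<Rightarrow> 'v \<Rightarrow> 'v \<Rightarrow> real \<Rightarrow> bool" where
  "max_flow_value V c s t val \<longleftrightarrow>
     (\<exists>f. is_flow V c s t f \<and> flow_value V s f = val) \<and>
     (\<forall>f. is_flow V c s t f \<longrightarrow> flow_value V s f \<le> val)"

definition C_uniform :: "'a set \<Rightarrow> 'b set \<Rightarrow> 'c set \<Rightarrow> ('a \<Rightarrow> 'c \<Rightarrow> 'b) \<Rightarrow> bool" where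
  "C_uniform L L' U F \<longleftrightarrow>
     (\<exists>p :: 'a \<Rightarrow> 'c \<Rightarrow> real.
        (\<forall>x\<in>L. \<forall>u\<in>U. 0 \<le> p x u) \<and>
        (\<forall>x\<in>L. (\<Sum>u\<in>U. p x u) = 1) \<and>
        (\<forall>x'\<in>L'. (\<Sum>x\<in>L. \<Sum>u\<in>{u\<in>U. F x u = x'}. p x u * (1 / real (card L)))
                   = 1 / real (card L')))"

end

theory Submission
  imports Defs
begin

lemma sum_nodes:
  assumes "finite L" "finite L'"
  shows "(\<Sum>v\<in>net_nodes L L'. g v) = g Src + g Snk + (\<Sum>x\<in>L. g (LN x)) + (\<Sum>y\<in>L'. g (RN y))"
proof -
  have e: "net_nodes L L' = insert Src (insert Snk (LN ` L \<union> RN ` L'))"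
    unfolding net_nodes_def by auto
  have "(\<Sum>v\<in>LN ` L \<union> RN ` L'. g v) = (\<Sum>v\<in>LN ` L. g v) + (\<Sum>v\<in>RN ` L'. g v)"
    by (rule sum.union_disjoint) (use assms in auto)
  also have "\<dots> = (\<Sum>x\<in>L. g (LN x)) + (\<Sum>y\<in>L'. g (RN y))"
    by (simp add: sum.reindex inj_on_def)
  finally show ?thesis unfolding e using assms by (simp add: add.assoc image_iff)
qed

lemma all_eq_from_sum:
  fixes h :: "'x \<Rightarrow> real"
  assumes "finite A" "\<forall>x\<in>A. h x \<le> c" "sum h A = real (card A) * c"
  shows "\<forall>x\<in>A. h x = c"
proof (rule ccontr)
  assume "\<not> ?thesis"
  then obtain a where "a \<in> A" "h a < c" using assms(2) by force
  then have "sum h A < sum (\<lambda>_. c) A"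
    using sum_strict_mono_ex1[OF assms(1), of h "\<lambda>_. c"] assms(2) by blast
  then show False using assms(3) by simp
qed

lemma cap_simps:
  "net_cap L L' U F Src (LN x) = (if x \<in> L then real (card L') else 0)"
  "net_cap L L' U F (LN x) (RN y) = (if x \<in> L \<and> y \<in> L' \<and> (\<exists>u\<in>U. y = F x u) then real (card L') else 0)"
  "net_cap L L' U F (RN y) Snk = (if y \<in> L' then real (card L) else 0)"
  "net_cap L L' U F v Src = 0"
  "net_cap L L' U F Snk v = 0"
  "net_cap L L' U F v (LN x) = (if v = Src \<and> x \<in> L then real (card L') else 0)"
  "net_cap L L' U F (LN x) v = (if (\<exists>y. v = RN y \<and> x \<in> L \<and> y \<in> L' \<and> (\<exists>u\<in>U. y = F x u)) then real (card L') else 0)"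
  "net_cap L L' U F (RN y) v = (if v = Snk \<and> y \<in> L' then real (card L) else 0)"
  "net_cap L L' U F Src (RN y) = 0"
  "net_cap L L' U F Src Snk = 0"
  "net_cap L L' U F v (RN y) = (if (\<exists>x. v = LN x \<and> x \<in> L \<and> y \<in> L' \<and> (\<exists>u\<in>U. y = F x u)) then real (card L') else 0)"
  "net_cap L L' U F v Snk = (if (\<exists>y. v = RN y \<and> y \<in> L') then real (card L) else 0)"
  unfolding net_cap_def by (auto split: fnode.split)

theorem lemma1:
  fixes L :: "'a set" and L' :: "'b set" and U :: "'c set" and F :: "'a \<Rightarrow> 'c \<Rightarrow> 'b"
  assumes "finite L" and "finite L'" and "finite U"
    and "L \<noteq> {}" and "L' \<noteq> {}"
    and "\<forall>x\<in>L. \<forall>u\<in>U. F x u \<in> L'"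
  shows "C_uniform L L' U F \<longleftrightarrow>
         max_flow_value (net_nodes L L') (net_cap L L' U F) Src Snk (real (card L) * real (card L'))"
proof -
  define n where "n = real (card L)"
  define m where "m = real (card L')"
  define V where "V = net_nodes L L'"
  define c where "c = net_cap L L' U F"
  have npos: "n > 0" unfolding n_def using assms(1,4) by (simp add: card_gt_0_iff)
  have mpos: "m > 0" unfolding m_def using assms(2,5) by (simp add: card_gt_0_iff)
  have SV: "\<And>g. (\<Sum>v\<in>V. g v) = g Src + g Snk + (\<Sum>x\<in>L. g (LN x)) + (\<Sum>y\<in>L'. g (RN y))"
    unfolding V_def using sum_nodes assms(1,2) by blast
  have ub: "flow_value V Src f \<le> n * m" if fl: "is_flow V c Src Snk f" for f
  proof -
    have le: "\<And>u v. f u v \<le> c u v" and ge: "\<And>u v. 0 \<le> f u v" using fl unfolding is_flow_def by auto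
    have "(\<Sum>w\<in>V. f Src w) \<le> (\<Sum>w\<in>V. c Src w)"
      by (rule sum_mono) (rule le)
    also have "\<dots> = n * m" unfolding SV c_def by (simp add: cap_simps n_def m_def)
    finally have "(\<Sum>w\<in>V. f Src w) \<le> n * m" .
    moreover have "(\<Sum>u\<in>V. f u Src) \<ge> 0" by (rule sum_nonneg) (rule ge)
    ultimately show ?thesis unfolding flow_value_def by linarith
  qed
  show ?thesis
    unfolding n_def[symmetric] m_def[symmetric] V_def[symmetric] c_def[symmetric]
  proof
    assume "C_uniform L L' U F"
    then obtain p where p0: "\<forall>x\<in>L. \<forall>u\<in>U. 0 \<le> p x u" and p1: "\<forall>x\<in>L. (\<Sum>u\<in>U. p x u) = 1"
      and p2: "\<forall>x'\<in>L'. (\<Sum>x\<in>L. \<Sum>u\<in>{u\<in>U. F x u = x'}. p x u * (1 / n)) = 1 / m"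
      unfolding C_uniform_def n_def m_def by blast
    define f where "f v w = (case (v, w) of
        (Src, LN x) \<Rightarrow> (if x \<in> L then m else 0)
      | (LN x, RN y) \<Rightarrow> (if x \<in> L \<and> y \<in> L' then m * (\<Sum>u\<in>{u\<in>U. F x u = y}. p x u) else 0)
      | (RN y, Snk) \<Rightarrow> (if y \<in> L' then n else 0)
      | _ \<Rightarrow> 0)" for v w
    have fs: "f Src (LN x) = (if x \<in> L then m else 0)"
      "f (LN x) (RN y) = (if x \<in> L \<and> y \<in> L' then m * (\<Sum>u\<in>{u\<in>U. F x u = y}. p x u) else 0)"
      "f (RN y) Snk = (if y \<in> L' then n else 0)"
      "f v Src = 0" "f Snk v = 0" "f Src Snk = 0" "f Src (RN y) = 0"
      "f (LN x) (LN x') = 0" "f (LN x) Snk = 0" "f (RN y) (LN x) = 0" "f (RN y) (RN y') = 0"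
      for x y v x' y' unfolding f_def by (auto split: fnode.split)
    have sub1: "(\<Sum>u\<in>{u\<in>U. F x u = y}. p x u) \<le> 1" if "x \<in> L" for x y
    proof -
      have "(\<Sum>u\<in>{u\<in>U. F x u = y}. p x u) \<le> (\<Sum>u\<in>U. p x u)"
        by (rule sum_mono2) (use assms(3) p0 that in auto)
      then show ?thesis using p1 that by simp
    qed
    have sub0: "(\<Sum>u\<in>{u\<in>U. F x u = y}. p x u) \<ge> 0" if "x \<in> L" for x y
      by (rule sum_nonneg) (use p0 that in auto)
    have grp: "(\<Sum>y\<in>L'. \<Sum>u\<in>{u\<in>U. F x u = y}. p x u) = 1" if "x \<in> L" for x
      using sum.group[OF assms(3) assms(2), of "F x" "p x"] assms(6) that p1 by auto
    have isf: "is_flow V c Src Snk f"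
      unfolding is_flow_def
    proof (intro conjI allI impI ballI)
      fix v w
      show "0 \<le> f v w" unfolding f_def using npos mpos sub0
        by (auto split: fnode.split)
      show "f v w \<le> c v w"
      proof (cases v)
        case (LN x)
        then show ?thesis
        proof (cases w)
          case (RN y)
          show ?thesis
          proof (cases "x \<in> L \<and> y \<in> L'")
            case True
            show ?thesis
            proof (cases "\<exists>u\<in>U. y = F x u")
              case True2: True
              then show ?thesis using LN RN True sub1[of x y] mpos
                by (simp add: fs c_def cap_simps m_def)
            next
              case False
              then have "{u\<in>U. F x u = y} = {}" by auto
              then have "f v w = 0" using LN RN by (simp only: fs sum.empty) simp
              then show ?thesis by (simp add: c_def net_cap_def split: fnode.split)
            qed
          next
            case False
            then have "f v w = 0" using LN RN by (auto simp add: fs)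
            then show ?thesis by (simp add: c_def net_cap_def split: fnode.split)
          qed
        qed (use LN in \<open>simp_all add: fs c_def cap_simps\<close>)
      qed (auto simp: fs c_def cap_simps f_def m_def n_def split: fnode.split)
    next
      fix v w assume "v \<notin> V \<or> w \<notin> V"
      then show "f v w = 0" unfolding V_def net_nodes_def f_def
        by (auto split: fnode.split)
    next
      fix v assume "v \<in> V - {Src, Snk}"
      then consider x where "v = LN x" "x \<in> L" | y where "v = RN y" "y \<in> L'"
        unfolding V_def net_nodes_def by auto
      then show "(\<Sum>u\<in>V. f u v) = (\<Sum>w\<in>V. f v w)"
      proof cases
        case 1
        then show ?thesis unfolding SV using grp[of x]
          by (simp add: fs sum_distrib_left[symmetric])
      next
        case 2
        have "(\<Sum>x\<in>L. \<Sum>u\<in>{u\<in>U. F x u = y}. p x u) * (1 / n) = 1 / m"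
          using p2 2 by (simp only: sum_distrib_right)
        then have "(\<Sum>x\<in>L. \<Sum>u\<in>{u\<in>U. F x u = y}. p x u) = n / m"
          using npos mpos by (simp add: field_simps)
        then have "(\<Sum>x\<in>L. m * (\<Sum>u\<in>{u\<in>U. F x u = y}. p x u)) = n"
          using mpos by (simp add: sum_distrib_left[symmetric])
        then show ?thesis unfolding SV using 2 by (simp add: fs)
      qed
    qed
    have "flow_value V Src f = n * m"
      unfolding flow_value_def SV using assms(1) by (simp add: fs n_def)
    then show "max_flow_value V c Src Snk (n * m)"
      unfolding max_flow_value_def using isf ub by auto
  next
    assume "max_flow_value V c Src Snk (n * m)"
    then obtain f where fl: "is_flow V c Src Snk f" and fv: "flow_value V Src f = n * m"
      unfolding max_flow_value_def by blast
    have le: "\<And>u v. f u v \<le> c u v" and ge: "\<And>u v. 0 \<le> f u v" using fl unfolding is_flow_def by auto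
    have z: "c u v = 0 \<Longrightarrow> f u v = 0" for u v using le[of u v] ge[of u v] by simp
    have cons: "\<And>v. v \<in> V - {Src, Snk} \<Longrightarrow> (\<Sum>u\<in>V. f u v) = (\<Sum>w\<in>V. f v w)"
      using fl unfolding is_flow_def by auto
    define g where "g x y = f (LN x) (RN y)" for x y
    have g0: "g x y \<ge> 0" for x y unfolding g_def by (rule ge)
    have gz: "g x y = 0" if "\<not> (\<exists>u\<in>U. y = F x u)" for x y
      unfolding g_def by (rule z) (use that in \<open>simp add: c_def cap_simps\<close>)
    have srcsum: "(\<Sum>x\<in>L. f Src (LN x)) = n * m"
      using fv unfolding flow_value_def SV
      by (simp add: z c_def cap_simps)
    have srcle: "\<forall>x\<in>L. f Src (LN x) \<le> m"
    proof
      fix x assume "x \<in> L"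
      then show "f Src (LN x) \<le> m" using le[of Src "LN x"] by (simp add: c_def cap_simps m_def)
    qed
    have "\<forall>x\<in>L. f Src (LN x) = m"
      by (rule all_eq_from_sum[OF assms(1) srcle]) (use srcsum in \<open>simp add: n_def m_def\<close>)
    then have srcm: "\<And>x. x \<in> L \<Longrightarrow> f Src (LN x) = m" by blast
    have outL: "(\<Sum>y\<in>L'. g x y) = m" if "x \<in> L" for x
    proof -
      have "LN x \<in> V - {Src, Snk}" unfolding V_def net_nodes_def using that by auto
      from cons[OF this] show ?thesis unfolding SV g_def using srcm[OF that] that
        by (simp add: z c_def cap_simps)
    qed
    have inR: "(\<Sum>x\<in>L. g x y) \<le> n" if "y \<in> L'" for y
    proof -
      have "RN y \<in> V - {Src, Snk}" unfolding V_def net_nodes_def using that by auto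
      from cons[OF this] have "(\<Sum>x\<in>L. g x y) = f (RN y) Snk" unfolding SV g_def using that
        by (simp add: z c_def cap_simps)
      also have "\<dots> \<le> n" using le[of "RN y" Snk] that by (simp add: c_def cap_simps n_def)
      finally show ?thesis .
    qed
    have "(\<Sum>y\<in>L'. \<Sum>x\<in>L. g x y) = (\<Sum>x\<in>L. \<Sum>y\<in>L'. g x y)" by (rule sum.swap)
    also have "\<dots> = n * m" using outL by (simp add: n_def)
    finally have "\<forall>y\<in>L'. (\<Sum>x\<in>L. g x y) = n"
      by (intro all_eq_from_sum[OF assms(2)]) (use inR in \<open>auto simp: m_def\<close>)
    then have inRn: "\<And>y. y \<in> L' \<Longrightarrow> (\<Sum>x\<in>L. g x y) = n" by blast
    define k where "k x y = real (card {u\<in>U. F x u = y})" for x y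
    define p where "p x u = g x (F x u) / (m * k x (F x u))" for x u
    have key: "(\<Sum>u\<in>{u\<in>U. F x u = y}. p x u) = g x y / m" for x y
    proof (cases "\<exists>u\<in>U. y = F x u")
      case True
      then have kp: "k x y > 0" unfolding k_def using assms(3) by (auto simp: card_gt_0_iff)
      have "(\<Sum>u\<in>{u\<in>U. F x u = y}. p x u) = (\<Sum>u\<in>{u\<in>U. F x u = y}. g x y / (m * k x y))"
        by (rule sum.cong) (auto simp: p_def)
      also have "\<dots> = k x y * (g x y / (m * k x y))" by (simp add: k_def)
      also have "\<dots> = g x y / m" using kp mpos by (simp add: field_simps)
      finally show ?thesis .
    next
      case False
      then have "{u\<in>U. F x u = y} = {}" by auto
      then show ?thesis using gz[OF False] by (simp only: sum.empty)
    qed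
    show "C_uniform L L' U F"
      unfolding C_uniform_def
    proof (intro exI conjI ballI)
      fix x u assume "x \<in> L" "u \<in> U"
      show "0 \<le> p x u" unfolding p_def k_def using g0 mpos by simp
    next
      fix x assume x: "x \<in> L"
      have im: "F x ` U \<subseteq> L'" using assms(6) x by auto
      have "(\<Sum>u\<in>U. p x u) = (\<Sum>y\<in>L'. \<Sum>u\<in>{u\<in>U. F x u = y}. p x u)"
        using sum.group[OF assms(3) assms(2) im, of "p x"] by simp
      also have "\<dots> = (\<Sum>y\<in>L'. g x y) / m" by (simp add: key sum_divide_distrib)
      also have "\<dots> = 1" using outL[OF x] mpos by simp
      finally show "(\<Sum>u\<in>U. p x u) = 1" .
    next
      fix y assume y: "y \<in> L'"
      have "(\<Sum>x\<in>L. \<Sum>u\<in>{u\<in>U. F x u = y}. p x u * (1 / real (card L)))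
          = (\<Sum>x\<in>L. g x y) / m / n"
      proof -
        have "(\<Sum>x\<in>L. \<Sum>u\<in>{u\<in>U. F x u = y}. p x u * (1 / real (card L)))
            = (\<Sum>x\<in>L. (\<Sum>u\<in>{u\<in>U. F x u = y}. p x u) * (1 / n))"
          by (simp only: sum_distrib_right n_def)
        also have "\<dots> = (\<Sum>x\<in>L. g x y / m * (1 / n))" by (simp only: key)
        also have "\<dots> = (\<Sum>x\<in>L. g x y) / m / n"
          by (simp only: sum_distrib_right[symmetric] sum_divide_distrib[symmetric]) simp
        finally show ?thesis .
      qed
      also have "\<dots> = 1 / m" using inRn[OF y] npos mpos by simp
      finally show "(\<Sum>x\<in>L. \<Sum>u\<in>{u\<in>U. F x u = y}. p x u * (1 / real (card L))) = 1 / real (card L')"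
        unfolding m_def .
    qed
  qed
qed

end
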